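(* Let $n>k>0$ be integers and let $A$ be a $k$-splitting of $Q_2^n$. Then for every fixed direction, the number of $(n-k)$-faces in $A$ having this direction is even.
   Context: $Q_2^n=\{0,1\}^n$. For $0\le m\le n$, an $m$-face of $Q_2^n$ is given by a tuple $a=(a_1,\dots,a_n)\in\{0,1,*\}^n$ with exactly $m$ entries equal to $*$; it denotes the set $\{x\in Q_2^n : x_i=a_i \text{ whenever } a_i\in\{0,1\}\}$. The direction of a face is the set of positions of its asterisks. A $k$-splitting of $Q_2^n$ is a collection of exactly $2^k$ $(n-k)$-faces whose union is $Q_2^n$ (equivalently, a partition of $Q_2^n$ into $(n-k)$-faces). *)

theory Defs
  imports Main
begin

text \<open>Vertices of Q_2^n: 0/1 lists of length n (False = 0, True = 1).
  Faces: lists over {0,1,*} of length n, encoded as bool option lists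
  (None = *, Some False = 0, Some True = 1).\<close>

definition cube :: "nat \<Rightarrow> bool list set" where
  "cube n = {x. length x = n}"

definition face_set :: "bool option list \<Rightarrow> bool list set" where
  "face_set a = {x. length x = length a \<and>
      (\<forall>i < length a. a ! i \<noteq> None \<longrightarrow> x ! i = the (a ! i))}"

definition direction :: "bool option list \<Rightarrow> nat set" where
  "direction a = {i. i < length a \<and> a ! i = None}"

definition is_face :: "nat \<Rightarrow> nat \<Rightarrow> bool option list \<Rightarrow> bool" where
  "is_face n m a \<longleftrightarrow> length a = n \<and> card (direction a) = m"

definition is_splitting :: "nat \<Rightarrow> nat \<Rightarrow> bool option list set \<Rightarrow> bool" where
  "is_splitting n k A \<longleftrightarrow>
     (\<forall>a \<in> A. is_face n (n - k) a) \<and> finite A \<and> card A = 2 ^ k \<and>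
     (\<Union>a \<in> A. face_set a) = cube n"

end

theory Submission
  imports Defs
begin

definition flip :: "nat \<Rightarrow> bool list \<Rightarrow> bool list" where
  "flip j x = x[j := \<not> x ! j]"

definition chi :: "nat set \<Rightarrow> bool list \<Rightarrow> int" where
  "chi S x = (\<Prod>i\<in>S. if x ! i then -1 else 1)"

lemma flip_sum_zero:
  fixes g :: "'a \<Rightarrow> int"
  assumes "finite F" "\<And>x. x \<in> F \<Longrightarrow> f x \<in> F" "\<And>x. x \<in> F \<Longrightarrow> f (f x) = x"
    "\<And>x. x \<in> F \<Longrightarrow> g (f x) = - g x"
  shows "sum g F = 0"
proof -
  have b: "bij_betw f F F"
    by (rule bij_betw_byWitness[where f'=f]) (use assms in auto)
  have "sum g F = sum (g \<circ> f) F"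
    using sum.reindex_bij_betw[OF b, of g] by simp
  also have "\<dots> = - sum g F"
    using assms(4) by (simp add: sum_negf[symmetric])
  finally show ?thesis by simp
qed

lemma chi_flip:
  assumes "finite S" "j \<in> S" "j < length x"
  shows "chi S (flip j x) = - chi S x"
proof -
  have eq: "\<And>i. i \<in> S - {j} \<Longrightarrow> flip j x ! i = x ! i"
    by (auto simp: flip_def)
  have "chi S (flip j x) = (if flip j x ! j then -1 else 1) * (\<Prod>i\<in>S-{j}. if flip j x ! i then -1 else 1)"
    unfolding chi_def using assms by (simp add: prod.remove)
  also have "\<dots> = (if \<not> x ! j then -1 else 1) * (\<Prod>i\<in>S-{j}. if x ! i then -1 else (1::int))"
    using eq assms by (simp add: flip_def)
  also have "\<dots> = - chi S x"
    unfolding chi_def using assms by (simp add: prod.remove)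
  finally show ?thesis .
qed

lemma face_set_Nil: "face_set [] = {[]}"
  by (auto simp: face_set_def)

lemma face_set_Cons: "y # xs \<in> face_set (oo # a) \<longleftrightarrow> xs \<in> face_set a \<and> (oo \<noteq> None \<longrightarrow> y = the oo)"
  by (auto simp: face_set_def All_less_Suc2)

lemma face_set_Cons_Nil: "[] \<notin> face_set (oo # a)"
  by (simp add: face_set_def)

lemma face_set_None: "face_set (None # a) = Cons True ` face_set a \<union> Cons False ` face_set a"
proof (rule set_eqI)
  fix x show "x \<in> face_set (None # a) \<longleftrightarrow> x \<in> Cons True ` face_set a \<union> Cons False ` face_set a"
    by (cases x) (auto simp: face_set_Cons face_set_Cons_Nil)
qed

lemma face_set_Some: "face_set (Some b # a) = Cons b ` face_set a"
proof (rule set_eqI)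
  fix x show "x \<in> face_set (Some b # a) \<longleftrightarrow> x \<in> Cons b ` face_set a"
    by (cases x) (auto simp: face_set_Cons face_set_Cons_Nil)
qed

lemma direction_Nil: "direction [] = {}"
  by (auto simp: direction_def)

lemma direction_None: "direction (None # a) = insert 0 (Suc ` direction a)"
proof (rule set_eqI)
  fix x show "x \<in> direction (None # a) \<longleftrightarrow> x \<in> insert 0 (Suc ` direction a)"
    by (cases x) (auto simp: direction_def)
qed

lemma direction_Some: "direction (Some b # a) = Suc ` direction a"
proof (rule set_eqI)
  fix x show "x \<in> direction (Some b # a) \<longleftrightarrow> x \<in> Suc ` direction a"
    by (cases x) (auto simp: direction_def)
qed

lemma finite_direction: "finite (direction a)"
  unfolding direction_def by auto

lemma card_face_set: "card (face_set a) = 2 ^ card (direction a) \<and> finite (face_set a)"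
proof (induction a)
  case Nil
  then show ?case by (simp add: face_set_Nil direction_Nil)
next
  case (Cons oo a)
  show ?case
  proof (cases oo)
    case None
    have d: "Cons True ` face_set a \<inter> Cons False ` face_set a = {}" by auto
    have "card (face_set (oo # a)) = card (Cons True ` face_set a) + card (Cons False ` face_set a)"
      using None Cons d by (simp add: face_set_None card_Un_disjoint)
    also have "\<dots> = 2 * 2 ^ card (direction a)" using Cons by (simp add: card_image)
    finally show ?thesis using None Cons finite_direction
      by (simp add: face_set_None direction_None card_image image_iff)
  next
    case (Some b)
    then show ?thesis using Cons by (simp add: face_set_Some direction_Some card_image)
  qed
qed

lemma pm1_prod:
  shows "(\<Prod>i\<in>S. if P i then -1 else (1::int)) = 1 \<or> (\<Prod>i\<in>S. if P i then -1 else (1::int)) = -1"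
proof (cases "finite S")
  case True
  then show ?thesis by (induction S rule: finite_induct) auto
qed simp

lemma pm1_prod_neg:
  "(\<Prod>i\<in>S. if P i then -1 else (1::int)) \<noteq> -1 \<Longrightarrow> (\<Prod>i\<in>S. if P i then -1 else (1::int)) = 1"
  using pm1_prod[of P S] by auto

lemma parity_pm1:
  fixes c :: "'a \<Rightarrow> int"
  assumes "finite B" "\<forall>b\<in>B. c b = 1 \<or> c b = -1"
  shows "even (sum c B) = even (card B)"
  using assms by (induction B rule: finite_induct) auto


theorem proposition5:
  fixes n k :: nat and A :: "bool option list set"
  assumes "0 < k" and "k < n" and "is_splitting n k A"
  shows "\<forall>D. even (card {a \<in> A. direction a = D})"
proof
  fix D
  from assms(3) have faces: "\<forall>a\<in>A. is_face n (n-k) a" and finA: "finite A"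
    and cardA: "card A = 2^k" and cov: "(\<Union>a\<in>A. face_set a) = cube n"
    by (auto simp: is_splitting_def)
  show "even (card {a\<in>A. direction a = D})"
  proof (cases "{a\<in>A. direction a = D} = {}")
    case True then show ?thesis by (metis card.empty even_zero)
  next
    case False
    then obtain a0 where a0: "a0 \<in> A" "direction a0 = D" by auto
    have lenA: "\<forall>a\<in>A. length a = n" and cdA: "\<forall>a\<in>A. card (direction a) = n-k"
      using faces by (auto simp: is_face_def)
    have dirsub: "\<forall>a\<in>A. direction a \<subseteq> {..<n}" using lenA by (auto simp: direction_def)
    have cD: "card D = n-k" and Dsub: "D \<subseteq> {..<n}" using a0 cdA dirsub by auto
    define S where "S = {..<n} - D"
    have finS: "finite S" by (simp add: S_def)
    have cS: "card S = k" using cD Dsub assms(2)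
      by (simp add: S_def card_Diff_subset finite_subset)
    then have "S \<noteq> {}" using assms(1) by auto
    then obtain j where jS: "j \<in> S" by auto
    have jn: "j < n" using jS S_def by auto
    have facesub: "\<forall>a\<in>A. face_set a \<subseteq> cube n" using lenA by (auto simp: face_set_def cube_def)
    have cardface: "\<forall>a\<in>A. card (face_set a) = 2^(n-k)" using card_face_set cdA by auto
    have finface: "\<And>a. finite (face_set a)" using card_face_set by auto
    have fincube: "finite (cube n)" and cardcube: "card (cube n) = 2^n"
      using finite_lists_length_eq[of "UNIV::bool set" n] card_lists_length_eq[of "UNIV::bool set" n]
      by (simp_all add: cube_def)
    define cnt where "cnt x = card {a\<in>A. x \<in> face_set a}" for x
    have cnt_sum: "cnt x = (\<Sum>a\<in>A. if x \<in> face_set a then 1 else 0)" for x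
    proof -
      have "cnt x = (\<Sum>a\<in>{a\<in>A. x \<in> face_set a}. 1)" unfolding cnt_def by (rule card_eq_sum)
      also have "\<dots> = (\<Sum>a\<in>A. if x \<in> face_set a then 1 else 0)" by (rule sum.inter_filter[OF finA])
      finally show ?thesis .
    qed
    have filt: "(\<Sum>x\<in>cube n. if x \<in> face_set a then f x else 0) = (\<Sum>x\<in>face_set a. f x)"
      if "a \<in> A" for a and f :: "bool list \<Rightarrow> 'b::comm_monoid_add"
    proof -
      have "(\<Sum>x\<in>cube n. if x \<in> face_set a then f x else 0) = (\<Sum>x\<in>{x\<in>cube n. x \<in> face_set a}. f x)"
        by (rule sum.inter_filter[OF fincube, symmetric])
      also have "{x\<in>cube n. x \<in> face_set a} = face_set a" using facesub that by auto
      finally show ?thesis .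
    qed
    have "(\<Sum>x\<in>cube n. cnt x) = (\<Sum>a\<in>A. \<Sum>x\<in>cube n. if x \<in> face_set a then 1 else 0)"
      unfolding cnt_sum by (rule sum.swap)
    also have "\<dots> = (\<Sum>a\<in>A. card (face_set a))"
      by (rule sum.cong[OF refl]) (simp add: filt)
    also have "\<dots> = 2^k * 2^(n-k)" using cardface cardA by simp
    also have "\<dots> = (2::nat)^n" using assms(2) by (simp add: power_add[symmetric])
    finally have sumcnt: "(\<Sum>x\<in>cube n. cnt x) = 2^n" .
    have cnt_ge: "1 \<le> cnt x" if "x \<in> cube n" for x
    proof -
      from that cov obtain a where "a \<in> A" "x \<in> face_set a" by auto
      then have "{a\<in>A. x \<in> face_set a} \<noteq> {}" by auto
      then show ?thesis unfolding cnt_def using finA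
        by (metis (no_types, lifting) One_nat_def Suc_leI card_gt_0_iff finite_subset mem_Collect_eq subsetI)
    qed
    have cnt1: "\<forall>x\<in>cube n. cnt x = 1"
    proof (rule ccontr)
      assume "\<not> (\<forall>x\<in>cube n. cnt x = 1)"
      then obtain y where y: "y \<in> cube n" "cnt y \<noteq> 1" by auto
      have "(\<Sum>x\<in>cube n. (1::nat)) < (\<Sum>x\<in>cube n. cnt x)"
        by (rule sum_strict_mono_ex1) (use fincube cnt_ge y in \<open>auto intro!: bexI[of _ y] le_neq_implies_less\<close>)
      then show False using sumcnt cardcube by simp
    qed
    have flip_len: "length (flip i x) = length x" for i x by (simp add: flip_def)
    have flip_flip: "flip i (flip i x) = x" if "i < length x" for i x
      using that by (simp add: flip_def)
    have chi_cube: "(\<Sum>x\<in>cube n. chi S x) = 0"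
      by (rule flip_sum_zero[where f="flip j"])
        (use fincube jn in \<open>auto simp: cube_def flip_len flip_flip intro: chi_flip[OF finS jS]\<close>)
    have decomp: "(\<Sum>x\<in>cube n. chi S x) = (\<Sum>a\<in>A. \<Sum>x\<in>face_set a. chi S x)"
    proof -
      have "(\<Sum>a\<in>A. \<Sum>x\<in>face_set a. chi S x) = (\<Sum>a\<in>A. \<Sum>x\<in>cube n. if x\<in>face_set a then chi S x else 0)"
        by (rule sum.cong[OF refl]) (simp add: filt)
      also have "\<dots> = (\<Sum>x\<in>cube n. \<Sum>a\<in>A. if x\<in>face_set a then chi S x else 0)" by (rule sum.swap)
      also have "\<dots> = (\<Sum>x\<in>cube n. chi S x * of_nat (cnt x))"
      proof (rule sum.cong[OF refl])
        fix x
        have "(\<Sum>a\<in>A. if x\<in>face_set a then chi S x else 0) = chi S x * (\<Sum>a\<in>A. if x\<in>face_set a then 1 else 0)"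
          by (auto simp: sum_distrib_left intro!: sum.cong)
        also have "(\<Sum>a\<in>A. if x\<in>face_set a then 1 else 0) = (of_nat (cnt x) :: int)"
          by (simp add: cnt_sum of_nat_sum of_bool_def[symmetric])
        finally show "(\<Sum>a\<in>A. if x\<in>face_set a then chi S x else 0) = chi S x * of_nat (cnt x)" .
      qed
      also have "\<dots> = (\<Sum>x\<in>cube n. chi S x)" using cnt1 by simp
      finally show ?thesis by simp
    qed
    have zero_other: "(\<Sum>x\<in>face_set a. chi S x) = 0" if aA: "a \<in> A" and dne: "direction a \<noteq> D" for a
    proof -
      have "\<not> direction a \<subseteq> D"
        using card_subset_eq[of D "direction a"] Dsub cD cdA aA dne finite_subset by auto
      then obtain i where i: "i \<in> direction a" "i \<notin> D" by auto
      have ia: "i < n" "a ! i = None" using i lenA aA by (auto simp: direction_def)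
      have iS: "i \<in> S" using i ia by (simp add: S_def)
      show ?thesis
      proof (rule flip_sum_zero[where f="flip i"])
        show "finite (face_set a)" by (rule finface)
      next
        fix x assume x: "x \<in> face_set a"
        then have lx: "length x = n" using aA lenA by (auto simp: face_set_def)
        show "flip i x \<in> face_set a"
          unfolding face_set_def
        proof (intro CollectI conjI allI impI)
          show "length (flip i x) = length a" using x by (simp add: flip_len face_set_def)
          fix i' assume i': "i' < length a" "a ! i' \<noteq> None"
          then have "i' \<noteq> i" using ia by auto
          then have "flip i x ! i' = x ! i'" by (simp add: flip_def)
          then show "flip i x ! i' = the (a ! i')" using x i' by (simp add: face_set_def)
        qed
        show "flip i (flip i x) = x" using lx ia by (simp add: flip_flip)
        show "chi S (flip i x) = - chi S x" using lx ia by (simp add: chi_flip[OF finS iS])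
      qed
    qed
    define c where "c a = (\<Prod>i\<in>S. if the (a!i) then -1 else (1::int))" for a
    have const: "(\<Sum>x\<in>face_set a. chi S x) = c a * 2^(n-k)" if aA: "a \<in> A" and dD: "direction a = D" for a
    proof -
      have "chi S x = c a" if x: "x \<in> face_set a" for x
        unfolding chi_def c_def
      proof (rule prod.cong[OF refl])
        fix i assume "i \<in> S"
        then have "i < length a" "a ! i \<noteq> None" using lenA aA dD by (auto simp: S_def direction_def)
        then have "x ! i = the (a ! i)" using x by (auto simp: face_set_def)
        then show "(if x ! i then -1 else 1) = (if the (a ! i) then -1 else (1::int))" by simp
      qed
      then have "(\<Sum>x\<in>face_set a. chi S x) = (\<Sum>x\<in>face_set a. c a)" by simp
      also have "\<dots> = of_nat (card (face_set a)) * c a" by simp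
      finally show ?thesis using cardface aA by simp
    qed
    have "(\<Sum>a\<in>A. \<Sum>x\<in>face_set a. chi S x) = (\<Sum>a\<in>A. if direction a = D then c a * 2^(n-k) else 0)"
      by (rule sum.cong[OF refl]) (simp add: const zero_other)
    also have "\<dots> = (\<Sum>a\<in>{a\<in>A. direction a = D}. c a * 2^(n-k))"
      by (rule sum.inter_filter[OF finA, symmetric])
    also have "\<dots> = (\<Sum>a\<in>{a\<in>A. direction a = D}. c a) * 2^(n-k)"
      by (simp add: sum_distrib_right)
    finally have "(\<Sum>a\<in>{a\<in>A. direction a = D}. c a) * 2^(n-k) = 0"
      using decomp chi_cube by simp
    then have s0: "(\<Sum>a\<in>{a\<in>A. direction a = D}. c a) = 0" by simp
    have "even (sum c {a\<in>A. direction a = D}) = even (card {a\<in>A. direction a = D})"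
      by (rule parity_pm1) (use finA in \<open>auto simp: c_def dest: pm1_prod_neg\<close>)
    then show ?thesis using s0 by simp
  qed
qed

end
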